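(* Let $M$ be a universal left-c.e. semi-measure and $\mathcal S$ the collection of all left-c.e. semi-measures. There is a left-c.e. semi-measure $\widetilde M$ that is not universal such that $\mathsf{MLR}_{\widetilde M}=\mathsf{MLR}_M=\bigcup_{\rho\in\mathcal S}\mathsf{MLR}_\rho$.
   Context: $2^{<\omega}$ is the set of finite binary strings, $\varepsilon$ the empty string, $[\![\sigma]\!]=\{X\in2^\omega:\sigma\preceq X\}$, $[\![S]\!]=\bigcup_{\sigma\in S}[\![\sigma]\!]$. A semi-measure is $\rho:2^{<\omega}\to[0,1]$ with $\rho(\varepsilon)=1$ and $\rho(\sigma)\ge\rho(\sigma0)+\rho(\sigma1)$; it is left-c.e. if its values are uniformly approximable from below by a computable, non-decreasing sequence of rationals. A left-c.e. semi-measure $M$ is universal if for every left-c.e. semi-measure $\rho$ there is $c\in\omega$ with $\rho(\sigma)\le c\cdot M(\sigma)$ for all $\sigma$. For $E\subseteq2^{<\omega}$, $\rho(E)=\sum_{\sigma\in E}\rho(\sigma)$. $X\in\mathsf{MLR}_\rho$ iff $X\notin\bigcap_i[\![U_i]\!]$ for every uniformly c.e. sequence $(U_i)$ of subsets of $2^{<\omega}$ with $\rho(U_i)\le2^{-i}$ for all $i$. *)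

theory Defs
  imports "HOL-Analysis.Analysis" "HOL-Library.Nat_Bijection"
begin

datatype recf = Zero | Succ | Proj nat | Comp recf "recf list" | Prim recf recf | Mn recf

inductive eval :: "recf \<Rightarrow> nat list \<Rightarrow> nat \<Rightarrow> bool" where
  eval_Zero: "eval Zero xs 0"
| eval_Succ: "eval Succ (x # xs) (Suc x)"
| eval_Proj: "i < length xs \<Longrightarrow> eval (Proj i) xs (xs ! i)"
| eval_Comp: "\<lbrakk> length ys = length fs; \<forall>i < length fs. eval (fs ! i) xs (ys ! i); eval g ys r \<rbrakk>
     \<Longrightarrow> eval (Comp g fs) xs r"
| eval_Prim0: "eval f xs r \<Longrightarrow> eval (Prim f g) (0 # xs) r"
| eval_PrimS: "\<lbrakk> eval (Prim f g) (n # xs) r; eval g (n # r # xs) s \<rbrakk>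
     \<Longrightarrow> eval (Prim f g) (Suc n # xs) s"
| eval_Mn: "\<lbrakk> eval f (n # xs) 0; \<forall>m < n. \<exists>k. k \<noteq> 0 \<and> eval f (m # xs) k \<rbrakk>
     \<Longrightarrow> eval (Mn f) xs n"

definition computable :: "(nat \<Rightarrow> nat) \<Rightarrow> bool" where
  "computable g \<longleftrightarrow> (\<exists>f. \<forall>n. eval f [n] (g n))"

definition ce_set :: "nat set \<Rightarrow> bool" where
  "ce_set A \<longleftrightarrow> (\<exists>f. A = {n. \<exists>r. eval f [n] r})"

text \<open>Finite binary strings are bool lists; infinite sequences are functions nat to bool.
  Effective coding of strings by naturals (bijective base-2 numeration).\<close>
definition str_code :: "bool list \<Rightarrow> nat" where
  "str_code \<sigma> = foldr (\<lambda>b n. 2 * n + (if b then 2 else 1)) \<sigma> 0"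

definition prefix_of :: "bool list \<Rightarrow> (nat \<Rightarrow> bool) \<Rightarrow> bool" where
  "prefix_of \<sigma> X \<longleftrightarrow> (\<forall>i < length \<sigma>. X i = \<sigma> ! i)"

definition cyl :: "bool list set \<Rightarrow> (nat \<Rightarrow> bool) set" where
  "cyl S = {X. \<exists>\<sigma>\<in>S. prefix_of \<sigma> X}"

definition semimeasure :: "(bool list \<Rightarrow> real) \<Rightarrow> bool" where
  "semimeasure \<rho> \<longleftrightarrow> \<rho> [] = 1 \<and> (\<forall>\<sigma>. 0 \<le> \<rho> \<sigma> \<and> \<rho> \<sigma> \<le> 1) \<and>
     (\<forall>\<sigma>. \<rho> (\<sigma> @ [False]) + \<rho> (\<sigma> @ [True]) \<le> \<rho> \<sigma>)"

definition rat_of_code :: "nat \<Rightarrow> real" where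
  "rat_of_code n = (case prod_decode n of (a, b) \<Rightarrow> real a / real (b + 1))"

definition left_ce :: "(bool list \<Rightarrow> real) \<Rightarrow> bool" where
  "left_ce \<rho> \<longleftrightarrow> (\<exists>g. computable g \<and>
     (\<forall>\<sigma> s. rat_of_code (g (prod_encode (str_code \<sigma>, s)))
              \<le> rat_of_code (g (prod_encode (str_code \<sigma>, Suc s)))) \<and>
     (\<forall>\<sigma>. (\<lambda>s. rat_of_code (g (prod_encode (str_code \<sigma>, s)))) \<longlonglongrightarrow> \<rho> \<sigma>))"

definition left_ce_semimeasure :: "(bool list \<Rightarrow> real) \<Rightarrow> bool" where
  "left_ce_semimeasure \<rho> \<longleftrightarrow> semimeasure \<rho> \<and> left_ce \<rho>"

definition universal :: "(bool list \<Rightarrow> real) \<Rightarrow> bool" where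
  "universal M \<longleftrightarrow> left_ce_semimeasure M \<and>
     (\<forall>\<rho>. left_ce_semimeasure \<rho> \<longrightarrow> (\<exists>c::nat. \<forall>\<sigma>. \<rho> \<sigma> \<le> real c * M \<sigma>))"

text \<open>rho(E) = sum over E, as an extended nonnegative real (always well-defined).\<close>
definition weight :: "(bool list \<Rightarrow> real) \<Rightarrow> bool list set \<Rightarrow> ennreal" where
  "weight \<rho> E = (\<Sum>\<^sub>\<infinity>\<sigma>\<in>E. ennreal (\<rho> \<sigma>))"

definition unif_ce :: "(nat \<Rightarrow> bool list set) \<Rightarrow> bool" where
  "unif_ce U \<longleftrightarrow> ce_set {prod_encode (i, str_code \<sigma>) | i \<sigma>. \<sigma> \<in> U i}"

definition MLR :: "(bool list \<Rightarrow> real) \<Rightarrow> (nat \<Rightarrow> bool) set" where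
  "MLR \<rho> = {X. \<forall>U. unif_ce U \<and> (\<forall>i. weight \<rho> (U i) \<le> ennreal ((1/2) ^ i))
                 \<longrightarrow> X \<notin> (\<Inter>i. cyl (U i))}"

end

theory Submission
  imports Defs
begin

inductive_cases Zero_E: "eval Zero xs r"
inductive_cases Succ_E: "eval Succ xs r"
inductive_cases Proj_E: "eval (Proj i) xs r"
inductive_cases Comp_E: "eval (Comp g fs) xs r"
inductive_cases Prim_E: "eval (Prim f g) xs r"
inductive_cases Mn_E: "eval (Mn f) xs r"

lemma eval_det: "eval f xs r \<Longrightarrow> eval f xs r' \<Longrightarrow> r = r'"
proof (induction arbitrary: r' rule: eval.induct)
  case (eval_Zero xs) then show ?case by (rule Zero_E) simp
next
  case (eval_Succ x xs) then show ?case by (rule Succ_E) simp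
next
  case (eval_Proj i xs) from eval_Proj.prems show ?case by (rule Proj_E) simp
next
  case (eval_Comp ys fs xs g r)
  from eval_Comp.prems obtain ys' where y': "length ys' = length fs"
    "\<forall>i<length fs. eval (fs ! i) xs (ys' ! i)" "eval g ys' r'" by (rule Comp_E) blast
  have "ys = ys'" apply (rule nth_equalityI) using eval_Comp.IH(1) y' eval_Comp.hyps(1) by auto
  then show ?case using eval_Comp.IH(2) y' by blast
next
  case (eval_Prim0 f xs r g) from eval_Prim0.prems show ?case by (rule Prim_E) (use eval_Prim0.IH in auto)
next
  case (eval_PrimS f g n xs r s) from eval_PrimS.prems show ?case
    by (rule Prim_E) (use eval_PrimS.IH in auto)
next
  case (eval_Mn f n xs)
  from eval_Mn.prems obtain n' where n': "eval f (n' # xs) 0" "\<forall>m<n'. \<exists>k. k \<noteq> 0 \<and> eval f (m # xs) k"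
    "r' = n'" by (rule Mn_E) blast
  show ?case
  proof (rule linorder_cases[of n n'])
    assume "n < n'" then show ?thesis using n' eval_Mn.IH(1) by fastforce
  next
    assume "n' < n" then show ?thesis using n' eval_Mn.IH(2) by fastforce
  qed (use n' in auto)
qed

definition rf :: "nat \<Rightarrow> (nat list \<Rightarrow> nat) \<Rightarrow> bool" where
  "rf k F \<longleftrightarrow> (\<exists>f. \<forall>xs. length xs = k \<longrightarrow> eval f xs (F xs))"

lemma rf_cong: "rf k F \<Longrightarrow> (\<And>xs. length xs = k \<Longrightarrow> F xs = G xs) \<Longrightarrow> rf k G"
  unfolding rf_def by metis

lemma rf_zero: "rf k (\<lambda>_. 0)"
  unfolding rf_def by (metis eval_Zero)

lemma rf_proj: "i < k \<Longrightarrow> rf k (\<lambda>xs. xs ! i)"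
  unfolding rf_def by (metis eval_Proj)

lemma rf_succ: "rf 1 (\<lambda>xs. Suc (xs ! 0))"
  unfolding rf_def
proof (intro exI allI impI)
  fix xs :: "nat list" assume "length xs = 1"
  then obtain x where "xs = [x]" by (metis One_nat_def length_0_conv length_Suc_conv)
  then show "eval Succ xs (Suc (xs ! 0))" by (simp add: eval_Succ)
qed

lemma rf_comp:
  assumes "rf m G" "\<forall>i<m. rf k (Fs i)"
  shows "rf k (\<lambda>xs. G (map (\<lambda>i. Fs i xs) [0..<m]))"
proof -
  obtain g where g: "\<forall>xs. length xs = m \<longrightarrow> eval g xs (G xs)" using assms(1) unfolding rf_def by blast
  have "\<forall>i<m. \<exists>f. \<forall>xs. length xs = k \<longrightarrow> eval f xs (Fs i xs)" using assms(2) unfolding rf_def by blast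
  then obtain fs where fs: "\<forall>i<m. \<forall>xs. length xs = k \<longrightarrow> eval (fs i) xs (Fs i xs)" by metis
  show ?thesis unfolding rf_def
  proof (intro exI allI impI)
    fix xs :: "nat list" assume xs: "length xs = k"
    show "eval (Comp g (map fs [0..<m])) xs (G (map (\<lambda>i. Fs i xs) [0..<m]))"
      by (rule eval_Comp[where ys="map (\<lambda>i. Fs i xs) [0..<m]"]) (use fs xs g in auto)
  qed
qed

lemma rf_comp1: "rf 1 G \<Longrightarrow> rf k F \<Longrightarrow> rf k (\<lambda>xs. G [F xs])"
  using rf_comp[of 1 G k "\<lambda>i. F"] by simp

lemma rf_comp2: "rf 2 G \<Longrightarrow> rf k F1 \<Longrightarrow> rf k F2 \<Longrightarrow> rf k (\<lambda>xs. G [F1 xs, F2 xs])"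
  using rf_comp[of 2 G k "\<lambda>i. if i = 0 then F1 else F2"] by (simp add: upt_rec)

fun prr :: "(nat list \<Rightarrow> nat) \<Rightarrow> (nat list \<Rightarrow> nat) \<Rightarrow> nat \<Rightarrow> nat list \<Rightarrow> nat" where
  "prr F G 0 ys = F ys"
| "prr F G (Suc n) ys = G (n # prr F G n ys # ys)"

lemma rf_prim:
  assumes "rf k F" "rf (Suc (Suc k)) G"
  shows "rf (Suc k) (\<lambda>xs. prr F G (hd xs) (tl xs))"
proof -
  obtain f where f: "\<forall>xs. length xs = k \<longrightarrow> eval f xs (F xs)" using assms(1) unfolding rf_def by blast
  obtain g where g: "\<forall>xs. length xs = Suc (Suc k) \<longrightarrow> eval g xs (G xs)" using assms(2) unfolding rf_def by blast
  have main: "length ys = k \<Longrightarrow> eval (Prim f g) (n # ys) (prr F G n ys)" for n ys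
  proof (induction n)
    case 0 then show ?case using f by (simp add: eval_Prim0)
  next
    case (Suc n) then show ?case using g by (auto intro: eval_PrimS)
  qed
  show ?thesis unfolding rf_def
  proof (intro exI allI impI)
    fix xs :: "nat list" assume "length xs = Suc k"
    then obtain n ys where "xs = n # ys" "length ys = k" by (metis length_Suc_conv)
    then show "eval (Prim f g) xs (prr F G (hd xs) (tl xs))" using main by simp
  qed
qed

lemma len2: "length xs = 2 \<Longrightarrow> xs = [xs!0, xs!1]"
  by (cases xs; cases "tl xs") auto

lemma rf_prim2_cong:
  assumes "rf (Suc 1) (\<lambda>xs. prr F G (hd xs) (tl xs))" "\<And>a b. prr F G a [b] = H a b"
  shows "rf 2 (\<lambda>xs. H (xs!0) (xs!1))"
proof (rule rf_cong)
  show "rf 2 (\<lambda>xs. prr F G (hd xs) (tl xs))" using assms(1) by (simp only: Suc_1)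
  fix xs :: "nat list" assume "length xs = 2"
  then have "xs = [xs!0, xs!1]" by (rule len2)
  then show "prr F G (hd xs) (tl xs) = H (xs!0) (xs!1)" using assms(2) by (metis list.sel(1) list.sel(3))
qed

lemma rf_prim1_cong:
  assumes "rf (Suc 0) (\<lambda>xs. prr F G (hd xs) (tl xs))" "\<And>a. prr F G a [] = H a"
  shows "rf 1 (\<lambda>xs. H (xs!0))"
proof (rule rf_cong)
  show "rf 1 (\<lambda>xs. prr F G (hd xs) (tl xs))" using assms(1) by (simp only: One_nat_def)
  fix xs :: "nat list" assume "length xs = 1"
  then obtain a where "xs = [a]" by (metis One_nat_def length_0_conv length_Suc_conv)
  then show "prr F G (hd xs) (tl xs) = H (xs!0)" using assms(2) by simp
qed

lemma rf_const: "rf k (\<lambda>_. c)"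
proof (induction c)
  case 0 then show ?case by (rule rf_zero)
next
  case (Suc c) then show ?case using rf_comp1[OF rf_succ Suc] by simp
qed

lemma rf_add2: "rf 2 (\<lambda>xs. xs!0 + xs!1)"
proof -
  have a: "rf 1 (\<lambda>xs. xs!0)" by (rule rf_proj) simp
  have b: "rf (Suc (Suc 1)) (\<lambda>ys. Suc (ys!1))"
    using rf_comp1[OF rf_succ, of "Suc (Suc 1)" "\<lambda>ys. ys!1"] rf_proj[of 1 "Suc (Suc 1)"] by simp
  have r: "rf (Suc 1) (\<lambda>xs. prr (\<lambda>ys. ys!0) (\<lambda>ys. Suc (ys!1)) (hd xs) (tl xs))"
    by (rule rf_prim[OF a b])
  have e: "prr (\<lambda>ys. ys!0) (\<lambda>ys. Suc (ys!1)) n ys = n + ys!0" for n ys by (induction n) auto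
  show ?thesis by (rule rf_prim2_cong[where H="\<lambda>a b. a + b", OF r]) (simp only: e; simp)
qed

lemma rf_add: "rf k F \<Longrightarrow> rf k G \<Longrightarrow> rf k (\<lambda>xs. F xs + G xs)"
  using rf_comp2[OF rf_add2] by simp

lemma rf_mult2: "rf 2 (\<lambda>xs. xs!0 * xs!1)"
proof -
  have b: "rf (Suc (Suc 1)) (\<lambda>ys. ys!1 + ys!2)" by (intro rf_add rf_proj) auto
  have r: "rf (Suc 1) (\<lambda>xs. prr (\<lambda>_. 0) (\<lambda>ys. ys!1 + ys!2) (hd xs) (tl xs))"
    by (rule rf_prim[OF rf_zero b])
  have e: "prr (\<lambda>_. 0) (\<lambda>ys. ys!1 + ys!2) n ys = n * ys!0" for n ys by (induction n) auto
  show ?thesis by (rule rf_prim2_cong[where H="\<lambda>a b. a * b", OF r]) (simp only: e; simp)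
qed

lemma rf_mult: "rf k F \<Longrightarrow> rf k G \<Longrightarrow> rf k (\<lambda>xs. F xs * G xs)"
  using rf_comp2[OF rf_mult2] by simp

lemma rf_pred: "rf 1 (\<lambda>xs. xs!0 - 1)"
proof -
  have b: "rf (Suc (Suc 0)) (\<lambda>ys. ys!0)" by (rule rf_proj) simp
  have r: "rf (Suc 0) (\<lambda>xs. prr (\<lambda>_. 0) (\<lambda>ys. ys!0) (hd xs) (tl xs))"
    by (rule rf_prim[OF rf_zero b])
  have e: "prr (\<lambda>_. 0) (\<lambda>ys. ys!0) n ys = n - 1" for n ys by (induction n) auto
  show ?thesis by (rule rf_prim1_cong[where H="\<lambda>a. a - 1", OF r]) (simp only: e; simp)
qed

lemma rf_sub2: "rf 2 (\<lambda>xs. xs!1 - xs!0)"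
proof -
  have a: "rf 1 (\<lambda>xs. xs!0)" by (rule rf_proj) simp
  have b: "rf (Suc (Suc 1)) (\<lambda>ys. ys!1 - 1)"
    using rf_comp1[OF rf_pred, of "Suc (Suc 1)" "\<lambda>ys. ys!1"] rf_proj[of 1 "Suc (Suc 1)"] by simp
  have r: "rf (Suc 1) (\<lambda>xs. prr (\<lambda>ys. ys!0) (\<lambda>ys. ys!1 - 1) (hd xs) (tl xs))"
    by (rule rf_prim[OF a b])
  have e: "prr (\<lambda>ys. ys!0) (\<lambda>ys. ys!1 - 1) n ys = ys!0 - n" for n ys by (induction n) auto
  show ?thesis by (rule rf_prim2_cong[where H="\<lambda>a b. b - a", OF r]) (simp only: e; simp)
qed

lemma rf_sub: "rf k F \<Longrightarrow> rf k G \<Longrightarrow> rf k (\<lambda>xs. F xs - G xs)"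
  using rf_comp2[OF rf_sub2, of k G F] by simp

lemma rf_if0:
  assumes "rf k C" "rf k A" "rf k B"
  shows "rf k (\<lambda>xs. if C xs = 0 then A xs else B xs)"
proof -
  have "rf k (\<lambda>xs. A xs * (1 - C xs) + B xs * (1 - (1 - C xs)))"
    by (intro rf_add rf_mult rf_sub rf_const assms)
  then show ?thesis by (rule rf_cong) auto
qed

lemma rf_if_le:
  assumes "rf k C" "rf k D" "rf k A" "rf k B"
  shows "rf k (\<lambda>xs. if C xs \<le> D xs then A xs else B xs)"
  using rf_if0[OF rf_sub[OF assms(1,2)] assms(3,4)] by simp

lemma rf_if_eq:
  assumes "rf k C" "rf k D" "rf k A" "rf k B"
  shows "rf k (\<lambda>xs. if C xs = D xs then A xs else B xs)"
proof -
  have "rf k (\<lambda>xs. if (C xs - D xs) + (D xs - C xs) = 0 then A xs else B xs)"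
    by (intro rf_if0 rf_add rf_sub assms)
  then show ?thesis by (rule rf_cong) auto
qed

lemma rf_prim':
  assumes "rf k F" "rf (Suc (Suc k)) G" "rf k N"
  shows "rf k (\<lambda>xs. prr F G (N xs) xs)"
proof -
  let ?Fs = "\<lambda>i. if i = 0 then N else (\<lambda>xs. xs ! (i - 1))"
  have "\<forall>i<Suc k. rf k (?Fs i)"
  proof (intro allI impI)
    fix i assume "i < Suc k"
    then show "rf k (?Fs i)" using assms(3) rf_proj[of "i - 1" k] by (cases i) auto
  qed
  then have r: "rf k (\<lambda>xs. (\<lambda>ys. prr F G (hd ys) (tl ys)) (map (\<lambda>i. ?Fs i xs) [0..<Suc k]))"
    by (rule rf_comp[OF rf_prim[OF assms(1,2)]])
  have e: "map (\<lambda>i. ?Fs i xs) [0..<Suc k] = N xs # xs" if "length xs = k" for xs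
  proof -
    have "[0..<Suc k] = 0 # map Suc [0..<k]" by (simp add: map_Suc_upt upt_conv_Cons del: upt_Suc)
    then have "map (\<lambda>i. ?Fs i xs) [0..<Suc k] = N xs # map (\<lambda>i. xs ! i) [0..<k]" by simp
    also have "map (\<lambda>i. xs ! i) [0..<k] = xs" using that map_nth by metis
    finally show ?thesis .
  qed
  show ?thesis by (rule rf_cong[OF r]) (simp only: e, simp)
qed

lemma rf_shuffle:
  assumes "rf m H" "\<forall>i<m. p i < k"
  shows "rf k (\<lambda>ys. H (map (\<lambda>i. ys ! p i) [0..<m]))"
  by (rule rf_comp[OF assms(1)]) (use assms(2) rf_proj in auto)

lemma rf_bsum:
  assumes "rf (Suc k) H" "rf k B"
  shows "rf k (\<lambda>xs. \<Sum>q<B xs. H (q # xs))"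
proof -
  have h: "rf (Suc (Suc k)) (\<lambda>ys. H (map (\<lambda>i. ys ! (if i = 0 then 0 else Suc i)) [0..<Suc k]))"
    by (rule rf_shuffle[OF assms(1)]) auto
  have h2: "rf (Suc (Suc k)) (\<lambda>ys. H (ys ! 0 # drop 2 ys))"
  proof (rule rf_cong[OF h])
    fix ys :: "nat list" assume l: "length ys = Suc (Suc k)"
    have "map (\<lambda>i. ys ! (if i = 0 then 0 else Suc i)) [0..<Suc k] = ys ! 0 # drop 2 ys"
      by (rule nth_equalityI) (use l in \<open>auto simp: nth_Cons' nth_drop simp del: upt_Suc\<close>)
    then show "H (map (\<lambda>i. ys ! (if i = 0 then 0 else Suc i)) [0..<Suc k]) = H (ys ! 0 # drop 2 ys)" by simp
  qed
  have g: "rf (Suc (Suc k)) (\<lambda>ys. ys!1 + H (ys ! 0 # drop 2 ys))"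
    by (rule rf_add[OF rf_proj h2]) simp
  have r: "rf k (\<lambda>xs. prr (\<lambda>_. 0) (\<lambda>ys. ys!1 + H (ys ! 0 # drop 2 ys)) (B xs) xs)"
    by (rule rf_prim'[OF rf_zero g assms(2)])
  have e: "prr (\<lambda>_. 0) (\<lambda>ys. ys!1 + H (ys ! 0 # drop 2 ys)) n xs = (\<Sum>q<n. H (q # xs))" for n xs
    by (induction n) auto
  show ?thesis by (rule rf_cong[OF r]) (simp only: e)
qed

lemma rf_pow2: "rf k F \<Longrightarrow> rf k (\<lambda>xs. 2 ^ F xs)"
proof -
  assume F: "rf k F"
  have g: "rf (Suc (Suc k)) (\<lambda>ys. ys!1 + ys!1)" by (intro rf_add rf_proj) auto
  have r: "rf k (\<lambda>xs. prr (\<lambda>_. 1) (\<lambda>ys. ys!1 + ys!1) (F xs) xs)"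
    by (rule rf_prim'[OF rf_const g F])
  have e: "prr (\<lambda>_. 1) (\<lambda>ys. ys!1 + ys!1) n xs = 2 ^ n" for n xs by (induction n) auto
  show ?thesis by (rule rf_cong[OF r]) (simp only: e)
qed

lemma rf_triangle: "rf k F \<Longrightarrow> rf k (\<lambda>xs. triangle (F xs))"
proof -
  assume F: "rf k F"
  have g: "rf (Suc (Suc k)) (\<lambda>ys. ys!1 + Suc (ys!0))"
    by (intro rf_add rf_proj rf_comp1[OF rf_succ, of _ "\<lambda>ys. ys!0", simplified]) auto
  have r: "rf k (\<lambda>xs. prr (\<lambda>_. 0) (\<lambda>ys. ys!1 + Suc (ys!0)) (F xs) xs)"
    by (rule rf_prim'[OF rf_zero g F])
  have e: "prr (\<lambda>_. 0) (\<lambda>ys. ys!1 + Suc (ys!0)) n xs = triangle n" for n xs by (induction n) auto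
  show ?thesis by (rule rf_cong[OF r]) (simp only: e)
qed

lemma rf_encode: "rf k A \<Longrightarrow> rf k B \<Longrightarrow> rf k (\<lambda>xs. prod_encode (A xs, B xs))"
  unfolding prod_encode_def by (simp add: rf_add rf_triangle)

primrec sq :: "nat \<Rightarrow> nat" where
  "sq 0 = 0"
| "sq (Suc n) = (if triangle (Suc (sq n)) \<le> Suc n then Suc (sq n) else sq n)"

lemma sq_bounds: "triangle (sq n) \<le> n \<and> n < triangle (Suc (sq n))"
proof (induction n)
  case 0 then show ?case by simp
next
  case (Suc n) then show ?case by auto
qed

lemma decode_sq: "prod_decode n = (n - triangle (sq n), sq n - (n - triangle (sq n)))"
proof -
  let ?s = "sq n" let ?m = "n - triangle (sq n)"
  have n: "n = triangle ?s + ?m" using sq_bounds[of n] by simp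
  have "?m \<le> ?s" using sq_bounds[of n] unfolding triangle_Suc by linarith
  then have "prod_decode (triangle ?s + ?m) = (?m, ?s - ?m)"
    by (simp add: prod_decode_triangle_add prod_decode_aux.simps)
  then show ?thesis using n by metis
qed

lemma rf_sq: "rf k F \<Longrightarrow> rf k (\<lambda>xs. sq (F xs))"
proof -
  assume F: "rf k F"
  have p1: "rf (Suc (Suc k)) (\<lambda>ys. ys!1)" by (rule rf_proj) simp
  have p0: "rf (Suc (Suc k)) (\<lambda>ys. ys!0)" by (rule rf_proj) simp
  have s1: "rf (Suc (Suc k)) (\<lambda>ys. Suc (ys!1))" using rf_comp1[OF rf_succ p1] by simp
  have s0: "rf (Suc (Suc k)) (\<lambda>ys. Suc (ys!0))" using rf_comp1[OF rf_succ p0] by simp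
  have g: "rf (Suc (Suc k)) (\<lambda>ys. if triangle (Suc (ys!1)) \<le> Suc (ys!0) then Suc (ys!1) else ys!1)"
    by (intro rf_if_le rf_triangle s1 s0 rf_proj) auto
  have r: "rf k (\<lambda>xs. prr (\<lambda>_. 0) (\<lambda>ys. if triangle (Suc (ys!1)) \<le> Suc (ys!0) then Suc (ys!1) else ys!1) (F xs) xs)"
    by (rule rf_prim'[OF rf_zero g F])
  have e: "prr (\<lambda>_. 0) (\<lambda>ys. if triangle (Suc (ys!1)) \<le> Suc (ys!0) then Suc (ys!1) else ys!1) n xs = sq n" for n xs
    by (induction n) auto
  show ?thesis by (rule rf_cong[OF r]) (simp only: e)
qed

lemma rf_fst: "rf k F \<Longrightarrow> rf k (\<lambda>xs. fst (prod_decode (F xs)))"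
  by (subst decode_sq) (simp add: rf_sub rf_triangle rf_sq)

lemma rf_snd: "rf k F \<Longrightarrow> rf k (\<lambda>xs. snd (prod_decode (F xs)))"
  by (subst decode_sq) (simp add: rf_sub rf_triangle rf_sq)

fun v2 :: "nat \<Rightarrow> nat" where
  "v2 x = (if x = 0 \<or> odd x then 0 else Suc (v2 (x div 2)))"
declare v2.simps[simp del]

lemma v2_odd: "odd x \<Longrightarrow> v2 x = 0" by (subst v2.simps) auto
lemma v2_double: "y > 0 \<Longrightarrow> v2 (2 * y) = Suc (v2 y)" by (subst v2.simps) auto

lemma v2_dvd: "x > 0 \<Longrightarrow> (2 ^ k dvd x \<longleftrightarrow> k \<le> v2 x)"
proof (induction x arbitrary: k rule: v2.induct)
  case (1 x)
  show ?case
  proof (cases "odd x")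
    case True
    then show ?thesis using v2_odd[OF True]
      by (cases k) (auto simp: dvd_mult_left[of 2 "2^_" x])
  next
    case False
    then obtain y where y: "x = 2 * y" "y > 0" using 1(2) by (metis evenE gr0I mult_0_right)
    have ih: "2 ^ j dvd y \<longleftrightarrow> j \<le> v2 y" for j using 1(1)[of j] 1(2) False y by simp
    show ?thesis
    proof (cases k)
      case 0 then show ?thesis by simp
    next
      case (Suc j) then show ?thesis using ih[of j] y v2_double[OF y(2)] by simp
    qed
  qed
qed

lemma v2_le: "x > 0 \<Longrightarrow> v2 x < x"
proof -
  assume x: "x > 0"
  have "2 ^ v2 x dvd x" using v2_dvd[OF x] by simp
  then have "2 ^ v2 x \<le> x" using x by (simp add: dvd_imp_le)
  then show ?thesis by (metis less_exp order.strict_trans2)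
qed

lemma v2_sum: "v2 x = (\<Sum>t<x. if 2 ^ Suc t dvd x then 1 else 0)"
proof (cases "x = 0")
  case True then show ?thesis by (simp add: v2.simps)
next
  case False
  then have x: "x > 0" by simp
  have "(\<Sum>t<x. if 2 ^ Suc t dvd x then 1 else 0) = (\<Sum>t<x. if t < v2 x then 1 else (0::nat))"
    by (rule sum.cong) (simp_all del: power_Suc add: v2_dvd[OF x] Suc_le_eq)
  also have "\<dots> = card ({..<x} \<inter> {t. t < v2 x})" by (simp add: sum.If_cases)
  also have "{..<x} \<inter> {t. t < v2 x} = {..<v2 x}" using v2_le[OF x] by auto
  finally show ?thesis by simp
qed

lemma dvd_sum: "(d dvd (x::nat)) \<longleftrightarrow> (\<Sum>q<Suc x. if q * d = x then 1 else 0) \<noteq> (0::nat)"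
proof
  assume dx: "d dvd x"
  have "\<exists>q<Suc x. q * d = x"
  proof (cases "d = 0")
    case True then show ?thesis using dx by auto
  next
    case False
    obtain q where q: "x = d * q" using dx by (auto elim: dvdE)
    obtain e where e: "d = Suc e" using False by (cases d) auto
    have "x = q + e * q" using q e by simp
    then have qx: "q < Suc x" by linarith
    have "q * d = x" using q by (simp add: mult.commute)
    then show ?thesis using qx by blast
  qed
  then obtain q where q: "q < Suc x" "q * d = x" by blast
  have "(if q * d = x then 1 else 0) \<le> (\<Sum>q<Suc x. if q * d = x then 1 else (0::nat))"
    by (rule member_le_sum) (use q in auto)
  then show "(\<Sum>q<Suc x. if q * d = x then 1 else 0) \<noteq> (0::nat)" using q by auto
next
  assume H: "(\<Sum>q<Suc x. if q * d = x then 1 else 0) \<noteq> (0::nat)"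
  show "d dvd x"
  proof (rule ccontr)
    assume nd: "\<not> d dvd x"
    have "\<forall>q\<in>{..<Suc x}. (if q * d = x then 1 else 0) = (0::nat)"
    proof
      fix q assume "q \<in> {..<Suc x}"
      show "(if q * d = x then 1 else 0) = (0::nat)" using nd by (metis dvd_triv_right)
    qed
    then have "(\<Sum>q<Suc x. if q * d = x then 1 else 0) = (0::nat)" by (rule sum.neutral)
    with H show False by simp
  qed
qed

lemma rf_dvd: "rf k D \<Longrightarrow> rf k X \<Longrightarrow> rf k (\<lambda>xs. if D xs dvd X xs then 1 else 0)"
proof -
  assume D: "rf k D" and X: "rf k X"
  have h: "rf (Suc k) (\<lambda>ys. if hd ys * D (tl ys) = X (tl ys) then 1 else 0)"
  proof -
    have "rf (Suc k) (\<lambda>ys. D (map (\<lambda>i. ys ! Suc i) [0..<k]))" by (rule rf_shuffle[OF D]) simp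
    moreover have "rf (Suc k) (\<lambda>ys. X (map (\<lambda>i. ys ! Suc i) [0..<k]))" by (rule rf_shuffle[OF X]) simp
    moreover have "rf (Suc k) (\<lambda>ys. ys ! 0)" by (rule rf_proj) simp
    ultimately have r: "rf (Suc k) (\<lambda>ys. if ys!0 * D (map (\<lambda>i. ys ! Suc i) [0..<k]) = X (map (\<lambda>i. ys ! Suc i) [0..<k]) then 1 else 0)"
      by (intro rf_if_eq rf_mult rf_const)
    have e: "length ys = Suc k \<Longrightarrow> map (\<lambda>i. ys ! Suc i) [0..<k] = tl ys \<and> ys ! 0 = hd ys" for ys
      by (cases ys) (auto intro: nth_equalityI)
    show ?thesis by (rule rf_cong[OF r]) (simp add: e)
  qed
  have s: "rf k (\<lambda>xs. Suc (X xs))" using rf_comp1[OF rf_succ X] by simp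
  have b: "rf k (\<lambda>xs. \<Sum>q<Suc (X xs). if hd (q#xs) * D (tl (q#xs)) = X (tl (q#xs)) then 1 else 0)"
    by (rule rf_bsum[OF h s])
  have "rf k (\<lambda>xs. if (\<Sum>q<Suc (X xs). if hd (q#xs) * D (tl (q#xs)) = X (tl (q#xs)) then 1 else 0::nat) = 0 then 0 else 1)"
    by (rule rf_if0[OF b rf_const rf_const])
  then show ?thesis by (rule rf_cong) (simp add: dvd_sum)
qed

lemma rf_v2: "rf k F \<Longrightarrow> rf k (\<lambda>xs. v2 (F xs))"
proof -
  assume F: "rf k F"
  have h: "rf (Suc k) (\<lambda>ys. if 2 ^ Suc (hd ys) dvd F (tl ys) then 1 else 0)"
  proof -
    have "rf (Suc k) (\<lambda>ys. F (map (\<lambda>i. ys ! Suc i) [0..<k]))" by (rule rf_shuffle[OF F]) simp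
    moreover have "rf (Suc k) (\<lambda>ys. ys ! 0)" by (rule rf_proj) simp
    ultimately have r: "rf (Suc k) (\<lambda>ys. if 2 ^ (ys!0 + 1) dvd F (map (\<lambda>i. ys ! Suc i) [0..<k]) then 1 else 0)"
      by (intro rf_dvd rf_pow2 rf_add rf_const)
    have e: "length ys = Suc k \<Longrightarrow> map (\<lambda>i. ys ! Suc i) [0..<k] = tl ys \<and> ys ! 0 = hd ys" for ys
      by (cases ys) (auto intro: nth_equalityI)
    show ?thesis by (rule rf_cong[OF r]) (simp add: e)
  qed
  have "rf k (\<lambda>xs. \<Sum>t<F xs. (\<lambda>ys. if 2 ^ Suc (hd ys) dvd F (tl ys) then 1 else 0) (t # xs))"
    by (rule rf_bsum[OF h F])
  then show ?thesis by (rule rf_cong) (simp add: v2_sum[of "F _"])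
qed

definition Zc :: "nat \<Rightarrow> nat" where
  "Zc c = (if 2 ^ v2 (c + 2) = c + 2 then 0 else v2 (c + 2))"

lemma rf_Zc: "rf k F \<Longrightarrow> rf k (\<lambda>xs. Zc (F xs))"
  unfolding Zc_def by (intro rf_if_eq rf_pow2 rf_v2 rf_add rf_const rf_zero)

lemma str_code_Nil[simp]: "str_code [] = 0" by (simp add: str_code_def)
lemma str_code_Cons[simp]: "str_code (b # s) = 2 * str_code s + (if b then 2 else 1)"
  by (simp add: str_code_def)

definition zs :: "bool list \<Rightarrow> nat" where
  "zs s = (if False \<in> set s then length (takeWhile id s) else 0)"

lemma code_v2: "(2 ^ v2 (str_code s + 2) = str_code s + 2 \<longleftrightarrow> False \<notin> set s) \<and>
   (False \<in> set s \<longrightarrow> v2 (str_code s + 2) = length (takeWhile id s))"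
proof (induction s)
  case Nil
  have "v2 (Suc (Suc 0)) = Suc 0" by (subst v2.simps) (simp add: v2_odd)
  then show ?case by simp
next
  case (Cons b s)
  show ?case
  proof (cases b)
    case True
    have e: "str_code (b # s) + 2 = 2 * (str_code s + 2)" using True by simp
    have v: "v2 (str_code (b # s) + 2) = Suc (v2 (str_code s + 2))" unfolding e by (rule v2_double) simp
    show ?thesis unfolding v using Cons True e by auto
  next
    case False
    have o: "odd (str_code (b # s) + 2)" using False by simp
    have "2 ^ 0 \<noteq> str_code (b # s) + 2" by simp
    then show ?thesis using v2_odd[OF o] False by simp
  qed
qed

lemma Zc_code: "Zc (str_code s) = zs s"
  using code_v2[of s] unfolding Zc_def zs_def by auto

lemma zs_mono: "zs s \<le> zs (s @ [b])"
  unfolding zs_def by (auto simp: takeWhile_append1)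

lemma zs_snoc_eq: "False \<in> set s \<Longrightarrow> zs (s @ t) = zs s"
  unfolding zs_def by (auto simp: takeWhile_append1)

lemma zs_rep: "zs (replicate n True @ [False]) = n"
  unfolding zs_def by (induction n) auto

lemma zs_Nil[simp]: "zs [] = 0" by (simp add: zs_def)

lemma rf_eval: "rf 1 (\<lambda>xs. H (xs!0)) \<Longrightarrow> \<exists>f. \<forall>n. eval f [n] (H n)"
  unfolding rf_def by (metis length_Cons list.size(3) nth_Cons_0 One_nat_def)

lemma computable_rf: "rf 1 (\<lambda>xs. g (xs!0)) \<Longrightarrow> computable g"
  unfolding computable_def by (rule rf_eval)

lemma rf_computable: "computable g \<Longrightarrow> rf 1 (\<lambda>xs. g (xs!0))"
proof -
  assume "computable g"
  then obtain f where f: "\<forall>n. eval f [n] (g n)" unfolding computable_def by blast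
  show ?thesis unfolding rf_def
  proof (intro exI allI impI)
    fix xs :: "nat list" assume "length xs = 1"
    then obtain a where "xs = [a]" by (metis One_nat_def length_0_conv length_Suc_conv)
    then show "eval f xs (g (xs ! 0))" using f by simp
  qed
qed

lemma eval_Mn_zero: "eval (Mn (Proj 1)) [x] r \<Longrightarrow> x = 0"
  by (erule Mn_E) (auto elim: Proj_E)

lemma eval_Mn_zero': "eval (Mn (Proj 1)) [0] 0"
  by (rule eval_Mn) (auto intro: eval_Proj[where xs="[0,0]" and i=1, simplified])

lemma ce_filter:
  assumes "ce_set S" "rf 1 (\<lambda>xs. h (xs!0))" "rf 1 (\<lambda>xs. q (xs!0))"
  shows "ce_set {n. h n \<in> S \<and> q n = 0}"
proof -
  obtain f where f: "S = {n. \<exists>r. eval f [n] r}" using assms(1) unfolding ce_set_def by blast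
  obtain fh where fh: "\<forall>n. eval fh [n] (h n)" using rf_eval[OF assms(2)] by blast
  obtain fq where fq: "\<forall>n. eval fq [n] (q n)" using rf_eval[OF assms(3)] by blast
  let ?f = "Comp (Proj 0) [Comp f [fh], Comp (Mn (Proj 1)) [fq]]"
  have "{n. h n \<in> S \<and> q n = 0} = {n. \<exists>r. eval ?f [n] r}"
  proof (intro set_eqI iffI)
    fix n assume "n \<in> {n. h n \<in> S \<and> q n = 0}"
    then have a: "h n \<in> S \<and> q n = 0" by simp
    then obtain r where r: "eval f [h n] r" using f by blast
    have e1: "eval (Comp f [fh]) [n] r"
      by (rule eval_Comp[where ys="[h n]"]) (use fh r in auto)
    have e2: "eval (Comp (Mn (Proj 1)) [fq]) [n] 0"
      by (rule eval_Comp[where ys="[0]"]) (use fq[rule_format, of n] a eval_Mn_zero' in \<open>auto simp: nth_Cons'\<close>)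
    have "eval ?f [n] r"
      by (rule eval_Comp[where ys="[r, 0]"]) (use e1 e2 in \<open>auto simp: nth_Cons' intro: eval_Proj[where xs="[r,0]" and i=0, simplified]\<close>)
    then show "n \<in> {n. \<exists>r. eval ?f [n] r}" by blast
  next
    fix n assume "n \<in> {n. \<exists>r. eval ?f [n] r}"
    then obtain r where "eval ?f [n] r" by blast
    then obtain ys where ysa: "\<forall>i<2. eval ([Comp f [fh], Comp (Mn (Proj 1)) [fq]] ! i) [n] (ys ! i)"
      by (elim Comp_E) (metis length_Cons list.size(3) numeral_2_eq_2)
    have ys: "True" "eval (Comp f [fh]) [n] (ys!0)" "eval (Comp (Mn (Proj 1)) [fq]) [n] (ys!1)"
      using ysa[rule_format, of 0] ysa[rule_format, of 1] by simp_all
    from ys(2) obtain ys1 where ys1: "length ys1 = 1" "eval fh [n] (ys1!0)" "eval f ys1 (ys!0)"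
      by (elim Comp_E) auto
    have "ys1 = [h n]" using ys1 fh eval_det
      by (metis One_nat_def length_0_conv length_Suc_conv nth_Cons_0)
    then have hS: "h n \<in> S" using ys1 f by auto
    from ys(3) obtain ys2 where ys2: "length ys2 = 1" "eval fq [n] (ys2!0)" "eval (Mn (Proj 1)) ys2 (ys!1)"
      by (elim Comp_E) auto
    have "ys2 = [q n]" using ys2 fq eval_det
      by (metis One_nat_def length_0_conv length_Suc_conv nth_Cons_0)
    then have "q n = 0" using ys2 eval_Mn_zero by auto
    then show "n \<in> {n. h n \<in> S \<and> q n = 0}" using hS by simp
  qed
  then show ?thesis unfolding ce_set_def by blast
qed

lemma unif_ce_filter:
  assumes "unif_ce V" "rf 1 (\<lambda>xs. Q (xs!0))"
  shows "unif_ce (\<lambda>i. {\<sigma> \<in> V (i + k). Q (str_code \<sigma>) = 0})"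
proof -
  let ?S = "{prod_encode (i, str_code \<sigma>) | i \<sigma>. \<sigma> \<in> V i}"
  let ?h = "\<lambda>n. prod_encode (fst (prod_decode n) + k, snd (prod_decode n))"
  let ?q = "\<lambda>n. Q (snd (prod_decode n))"
  have p: "rf 1 (\<lambda>xs. xs!0)" by (rule rf_proj) simp
  have h: "rf 1 (\<lambda>xs. ?h (xs!0))" by (intro rf_encode rf_add rf_fst rf_snd rf_const p)
  have q: "rf 1 (\<lambda>xs. ?q (xs!0))" using rf_comp1[OF assms(2) rf_snd[OF p]] by simp
  have c: "ce_set {n. ?h n \<in> ?S \<and> ?q n = 0}"
    by (rule ce_filter[OF assms(1)[unfolded unif_ce_def] h q])
  have "{n. ?h n \<in> ?S \<and> ?q n = 0} = {prod_encode (i, str_code \<sigma>) | i \<sigma>. \<sigma> \<in> {\<sigma> \<in> V (i + k). Q (str_code \<sigma>) = 0}}"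
  proof (intro set_eqI iffI)
    fix n assume "n \<in> {n. ?h n \<in> ?S \<and> ?q n = 0}"
    then obtain j \<sigma> where j: "?h n = prod_encode (j, str_code \<sigma>)" "\<sigma> \<in> V j" "?q n = 0" by blast
    obtain i c where ic: "prod_decode n = (i, c)" by (cases "prod_decode n")
    have "(i + k, c) = (j, str_code \<sigma>)" using j(1) ic by (simp add: prod_encode_eq)
    moreover have "n = prod_encode (i, c)" using ic by (metis prod_decode_inverse)
    ultimately show "n \<in> {prod_encode (i, str_code \<sigma>) | i \<sigma>. \<sigma> \<in> {\<sigma> \<in> V (i + k). Q (str_code \<sigma>) = 0}}"
      using j ic by auto
  next
    fix n assume "n \<in> {prod_encode (i, str_code \<sigma>) | i \<sigma>. \<sigma> \<in> {\<sigma> \<in> V (i + k). Q (str_code \<sigma>) = 0}}"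
    then obtain i \<sigma> where "n = prod_encode (i, str_code \<sigma>)" "\<sigma> \<in> V (i + k)" "Q (str_code \<sigma>) = 0" by blast
    then show "n \<in> {n. ?h n \<in> ?S \<and> ?q n = 0}" by auto
  qed
  then show ?thesis using c unfolding unif_ce_def by simp
qed

lemma infsum_cmult_ennreal: "(\<Sum>\<^sub>\<infinity>x\<in>B. c * f x) = c * (\<Sum>\<^sub>\<infinity>x\<in>B. (f x :: ennreal))"
proof -
  have "(\<Sum>\<^sub>\<infinity>x\<in>B. c * f x) = (SUP F\<in>{F. finite F \<and> F\<subseteq>B}. sum (\<lambda>x. c * f x) F)"
    by (rule nonneg_infsum_complete) simp
  also have "\<dots> = (SUP F\<in>{F. finite F \<and> F\<subseteq>B}. c * sum f F)" by (simp add: sum_distrib_left)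
  also have "\<dots> = c * (SUP F\<in>{F. finite F \<and> F\<subseteq>B}. sum f F)" by (rule SUP_mult_left_ennreal[symmetric])
  also have "(SUP F\<in>{F. finite F \<and> F\<subseteq>B}. sum f F) = (\<Sum>\<^sub>\<infinity>x\<in>B. f x)"
    by (rule nonneg_infsum_complete[symmetric]) simp
  finally show ?thesis .
qed

lemma weight_le:
  fixes \<rho> \<rho>' :: "bool list \<Rightarrow> real" and c :: ennreal
  assumes "A \<subseteq> B" "\<And>\<sigma>. \<sigma> \<in> A \<Longrightarrow> ennreal (\<rho> \<sigma>) \<le> c * ennreal (\<rho>' \<sigma>)"
  shows "weight \<rho> A \<le> c * weight \<rho>' B"
proof -
  have "weight \<rho> A \<le> infsum (\<lambda>\<sigma>. c * ennreal (\<rho>' \<sigma>)) B"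
    unfolding weight_def by (rule infsum_mono_neutral) (use assms in \<open>auto intro: nonneg_summable_on_complete\<close>)
  also have "\<dots> = c * weight \<rho>' B" unfolding weight_def by (rule infsum_cmult_ennreal)
  finally show ?thesis .
qed

lemma prefix_of_eq: "prefix_of \<sigma> X \<Longrightarrow> \<sigma> = map X [0..<length \<sigma>]"
  unfolding prefix_of_def by (intro nth_equalityI) auto

lemma half_pow_bound: "real c * (1/2) ^ (i + c) \<le> ((1/2) ^ i :: real)"
proof -
  have "real c \<le> 2 ^ c" using less_exp[of c] by (metis of_nat_le_iff of_nat_numeral of_nat_power less_imp_le)
  then have "real c * (1/2) ^ c \<le> 1" by (simp add: power_one_over field_simps)
  then have "real c * (1/2) ^ c * (1/2) ^ i \<le> 1 * (1/2) ^ i" by (intro mult_right_mono) auto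
  then show ?thesis by (simp add: power_add mult_ac)
qed

lemma MLR_dom:
  assumes "\<forall>\<sigma>. \<rho> \<sigma> \<le> real c * M \<sigma>" "\<forall>\<sigma>. 0 \<le> M \<sigma>"
  shows "MLR \<rho> \<subseteq> MLR M"
proof
  fix X assume X: "X \<in> MLR \<rho>"
  show "X \<in> MLR M" unfolding MLR_def
  proof (intro CollectI allI impI)
    fix U assume U: "unif_ce U \<and> (\<forall>i. weight M (U i) \<le> ennreal ((1/2)^i))"
    have ce: "unif_ce (\<lambda>i. U (i + c))"
      using unif_ce_filter[of U "\<lambda>_. 0" c] U rf_const[of 1 0] by simp
    have wt: "weight \<rho> (U (i + c)) \<le> ennreal ((1/2)^i)" for i
    proof -
      have "weight \<rho> (U (i+c)) \<le> ennreal (real c) * weight M (U (i+c))"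
      proof (rule weight_le)
        fix \<sigma> show "ennreal (\<rho> \<sigma>) \<le> ennreal (real c) * ennreal (M \<sigma>)"
          using assms by (simp add: ennreal_mult[symmetric] ennreal_leI)
      qed simp
      also have "\<dots> \<le> ennreal (real c) * ennreal ((1/2)^(i+c))"
        using U by (intro mult_left_mono) auto
      also have "\<dots> = ennreal (real c * (1/2)^(i+c))" by (simp add: ennreal_mult)
      also have "\<dots> \<le> ennreal ((1/2)^i)" by (rule ennreal_leI) (rule half_pow_bound)
      finally show ?thesis .
    qed
    have "X \<notin> (\<Inter>i. cyl (U (i + c)))" using X ce wt unfolding MLR_def by blast
    then show "X \<notin> (\<Inter>i. cyl (U i))" by blast
  qed
qed

definition Mt :: "(bool list \<Rightarrow> real) \<Rightarrow> bool list \<Rightarrow> real" where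
  "Mt M \<sigma> = M \<sigma> / 2 ^ zs \<sigma>"

lemma zs_app_mono: "zs s \<le> zs (s @ t)"
  by (cases "False \<in> set s") (auto simp: zs_snoc_eq zs_def)

lemma map_upt_split: "n \<le> N \<Longrightarrow> map X [0..<N] = map X [0..<n] @ map X [n..<N]"
  by (metis le_add_diff_inverse map_append upt_add_eq_append zero_le)

lemma zs_bounded: "\<exists>k. \<forall>n. zs (map X [0..<n]) \<le> k"
proof (cases "\<forall>p. X p")
  case True
  then have "zs (map X [0..<n]) = 0" for n unfolding zs_def by auto
  then show ?thesis by auto
next
  case False
  then obtain p where p: "\<not> X p" by blast
  let ?k = "zs (map X [0..<Suc p])"
  have "zs (map X [0..<n]) \<le> ?k" for n
  proof (cases "n \<le> Suc p")
    case True
    have "map X [0..<Suc p] = map X [0..<n] @ map X [n..<Suc p]" by (rule map_upt_split[OF True])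
    then show ?thesis by (metis zs_app_mono)
  next
    case False
    then have e: "map X [0..<n] = map X [0..<Suc p] @ map X [Suc p..<n]"
      by (intro map_upt_split) simp
    have F: "False \<in> set (map X [0..<Suc p])" using p by force
    have "zs (map X [0..<n]) = ?k" unfolding e by (rule zs_snoc_eq[OF F])
    then show ?thesis by simp
  qed
  then show ?thesis by blast
qed

lemma MLR_Mt:
  assumes "\<forall>\<sigma>. 0 \<le> M \<sigma>"
  shows "MLR M \<subseteq> MLR (Mt M)"
proof
  fix X assume X: "X \<in> MLR M"
  show "X \<in> MLR (Mt M)" unfolding MLR_def
  proof (intro CollectI allI impI notI)
    fix V assume V: "unif_ce V \<and> (\<forall>i. weight (Mt M) (V i) \<le> ennreal ((1/2)^i))"
    assume XV: "X \<in> (\<Inter>i. cyl (V i))"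
    obtain k where k: "\<forall>n. zs (map X [0..<n]) \<le> k" using zs_bounded by blast
    let ?W = "\<lambda>i. {\<sigma> \<in> V (i + k). Zc (str_code \<sigma>) - k = 0}"
    have rq: "rf 1 (\<lambda>xs. Zc (xs!0) - k)" by (intro rf_sub rf_Zc rf_const rf_proj) simp
    have ce: "unif_ce ?W" by (rule unif_ce_filter[OF conjunct1[OF V] rq])
    have wt: "weight M (?W i) \<le> ennreal ((1/2)^i)" for i
    proof -
      have "weight M (?W i) \<le> ennreal (2 ^ k) * weight (Mt M) (V (i+k))"
      proof (rule weight_le)
        fix \<sigma> assume "\<sigma> \<in> ?W i"
        then have z: "zs \<sigma> \<le> k" by (simp add: Zc_code)
        have "M \<sigma> = 2 ^ zs \<sigma> * Mt M \<sigma>" by (simp add: Mt_def)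
        also have "\<dots> \<le> 2 ^ k * Mt M \<sigma>"
          using z assms by (intro mult_right_mono) (auto simp: Mt_def)
        finally have le: "M \<sigma> \<le> 2 ^ k * Mt M \<sigma>" .
        have "ennreal (2 ^ k) * ennreal (Mt M \<sigma>) = ennreal (2 ^ k * Mt M \<sigma>)"
          by (rule ennreal_mult[symmetric]) (use assms in \<open>auto simp: Mt_def\<close>)
        then show "ennreal (M \<sigma>) \<le> ennreal (2 ^ k) * ennreal (Mt M \<sigma>)"
          using le by (metis ennreal_leI)
      qed auto
      also have "\<dots> \<le> ennreal (2 ^ k) * ennreal ((1/2)^(i+k))"
        using V by (intro mult_left_mono) auto
      also have "\<dots> = ennreal (2 ^ k * (1/2)^(i+k))" by (simp add: ennreal_mult)
      also have "2 ^ k * (1/2)^(i+k) = ((1/2)^i :: real)" by (simp add: power_add power_one_over)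
      finally show ?thesis .
    qed
    have "X \<in> (\<Inter>i. cyl (?W i))"
    proof
      fix i
      from XV have "X \<in> cyl (V (i + k))" by blast
      then obtain \<sigma> where s: "\<sigma> \<in> V (i + k)" "prefix_of \<sigma> X" unfolding cyl_def by blast
      have "zs \<sigma> \<le> k" using k prefix_of_eq[OF s(2)] by metis
      then have "\<sigma> \<in> ?W i" using s by (simp add: Zc_code)
      then show "X \<in> cyl (?W i)" using s unfolding cyl_def by blast
    qed
    then show False using X ce wt unfolding MLR_def by blast
  qed
qed

lemma str_code_snoc: "str_code (s @ [b]) = str_code s + 2 ^ length s * (if b then 2 else 1)"
  by (induction s) auto

lemma str_code_bound: "str_code s + 2 \<le> 2 ^ Suc (length s)"
  by (induction s) auto

lemma rat_of_code_encode: "rat_of_code (prod_encode (a, b)) = real a / real (b + 1)"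
  by (simp add: rat_of_code_def)

lemma ineq:
  fixes x p :: real
  assumes "1 \<le> x" "x \<le> 2 * p"
  shows "1 / (x + p)^2 + 1 / (x + 2 * p)^2 \<le> 1 / x^2"
proof -
  have a1: "((3/2) * x)^2 \<le> (x + p)^2" by (rule power_mono) (use assms in auto)
  have b1: "(2 * x)^2 \<le> (x + 2 * p)^2" by (rule power_mono) (use assms in auto)
  have a: "1 / (x + p)^2 \<le> 1 / ((3/2) * x)^2"
    by (rule divide_left_mono[OF a1]) (use assms in auto)
  have b: "1 / (x + 2 * p)^2 \<le> 1 / (2 * x)^2"
    by (rule divide_left_mono[OF b1]) (use assms in auto)
  have c: "1 / ((3/2) * x)^2 + 1 / (2 * x)^2 = (25/36) * (1 / x^2)"
    using assms by (simp add: field_simps power2_eq_square)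
  have "(25/36) * (1 / x^2) \<le> 1 / x^2" by (rule mult_left_le_one_le) auto
  then show ?thesis using a b c by linarith
qed

definition rho0 :: "bool list \<Rightarrow> real" where
  "rho0 s = 1 / (real (str_code s) + 1) ^ 2"

lemma rho0_pos: "rho0 s > 0" unfolding rho0_def by simp

lemma rho0_semi: "semimeasure rho0"
  unfolding semimeasure_def
proof (intro conjI allI)
  show "rho0 [] = 1" by (simp add: rho0_def)
next
  fix s show "0 \<le> rho0 s" using rho0_pos[of s] by simp
next
  fix s show "rho0 s \<le> 1" unfolding rho0_def by (simp add: power_le_one_iff)
next
  fix s
  let ?x = "real (str_code s) + 1" and ?p = "real (2 ^ length s :: nat)"
  have x: "1 \<le> ?x" by simp
  have "str_code s + 2 \<le> 2 * 2 ^ length s" using str_code_bound[of s] by simp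
  then have "real (str_code s + 2) \<le> real (2 * 2 ^ length s :: nat)" by (simp only: of_nat_le_iff)
  then have xp: "?x \<le> 2 * ?p" by simp
  have "rho0 (s @ [False]) = 1 / (?x + ?p)^2" unfolding rho0_def str_code_snoc by (simp add: algebra_simps)
  moreover have "rho0 (s @ [True]) = 1 / (?x + 2 * ?p)^2" unfolding rho0_def str_code_snoc by (simp add: algebra_simps)
  moreover have "rho0 s = 1 / ?x^2" unfolding rho0_def by simp
  ultimately show "rho0 (s @ [False]) + rho0 (s @ [True]) \<le> rho0 s" using ineq[OF x xp] by simp
qed

lemma rho0_lce: "left_ce_semimeasure rho0"
  unfolding left_ce_semimeasure_def
proof (intro conjI rho0_semi)
  let ?g = "\<lambda>n. prod_encode (1, (fst (prod_decode n) + 1) * (fst (prod_decode n) + 1) - 1)"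
  have p: "rf 1 (\<lambda>xs. xs!0)" by (rule rf_proj) simp
  have "computable ?g"
    by (rule computable_rf) (intro rf_encode rf_sub rf_mult rf_add rf_fst rf_const p)
  moreover have "rat_of_code (?g (prod_encode (str_code s, t))) = rho0 s" for s t
  proof -
    let ?c = "str_code s"
    have "(?c + 1) * (?c + 1) - 1 + 1 = (?c + 1) * (?c + 1)" by simp
    then show ?thesis by (simp add: rat_of_code_encode rho0_def power2_eq_square del: mult_Suc mult_Suc_right) (simp add: algebra_simps)
  qed
  ultimately show "left_ce rho0" unfolding left_ce_def by (intro exI[of _ ?g]) simp
qed

lemma universal_pos: "universal M \<Longrightarrow> M s > 0"
proof -
  assume u: "universal M"
  then obtain c :: nat where c: "\<forall>s. rho0 s \<le> real c * M s" using rho0_lce unfolding universal_def by blast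
  have "0 < real c * M s" using c rho0_pos[of s] by (meson less_le_trans)
  moreover have "M s \<ge> 0" using u unfolding universal_def left_ce_semimeasure_def semimeasure_def by blast
  ultimately show ?thesis by (simp add: zero_less_mult_iff)
qed

lemma rat_scale: "rat_of_code (prod_encode (fst (prod_decode m), (snd (prod_decode m) + 1) * 2 ^ z - 1))
   = rat_of_code m / 2 ^ z"
proof -
  obtain a b where ab: "prod_decode m = (a, b)" by (cases "prod_decode m")
  have "(b + 1) * 2 ^ z - 1 + 1 = (b + 1) * (2 ^ z :: nat)" by simp
  then show ?thesis using ab by (simp add: rat_of_code_def field_simps del: mult_Suc mult_Suc_right)
qed

lemma Mt_lce:
  assumes "left_ce_semimeasure M"
  shows "left_ce_semimeasure (Mt M)"
  unfolding left_ce_semimeasure_def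
proof (intro conjI)
  have sm: "semimeasure M" using assms unfolding left_ce_semimeasure_def by blast
  then have M0: "\<forall>s. 0 \<le> M s \<and> M s \<le> 1" and M1: "M [] = 1"
    and Ms: "\<forall>s. M (s @ [False]) + M (s @ [True]) \<le> M s" unfolding semimeasure_def by auto
  show "semimeasure (Mt M)" unfolding semimeasure_def
  proof (intro conjI allI)
    show "Mt M [] = 1" using M1 by (simp add: Mt_def)
  next
    fix s show "0 \<le> Mt M s" using M0 by (simp add: Mt_def)
  next
    fix s
    have "M s / 2 ^ zs s \<le> M s / 1" by (rule divide_left_mono) (use M0 in auto)
    then have h: "M s / 2 ^ zs s \<le> M s" by simp
    show "Mt M s \<le> 1" unfolding Mt_def using h M0 by (meson order_trans)
  next
    fix s
    have le: "M (s @ [b]) / 2 ^ zs (s @ [b]) \<le> M (s @ [b]) / 2 ^ zs s" for b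
      using M0 zs_mono[of s b] by (intro divide_left_mono) auto
    have "Mt M (s @ [False]) + Mt M (s @ [True]) \<le> M (s @ [False]) / 2 ^ zs s + M (s @ [True]) / 2 ^ zs s"
      unfolding Mt_def using le[of False] le[of True] by linarith
    also have "\<dots> = (M (s @ [False]) + M (s @ [True])) / 2 ^ zs s" by (simp add: add_divide_distrib)
    also have "\<dots> \<le> M s / 2 ^ zs s" using Ms by (simp add: divide_right_mono)
    finally show "Mt M (s @ [False]) + Mt M (s @ [True]) \<le> Mt M s" by (simp add: Mt_def)
  qed
next
  obtain g where g: "computable g"
    "\<forall>s t. rat_of_code (g (prod_encode (str_code s, t))) \<le> rat_of_code (g (prod_encode (str_code s, Suc t)))"
    "\<forall>s. (\<lambda>t. rat_of_code (g (prod_encode (str_code s, t)))) \<longlonglongrightarrow> M s"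
    using assms unfolding left_ce_semimeasure_def left_ce_def by blast
  let ?g = "\<lambda>n. prod_encode (fst (prod_decode (g n)), (snd (prod_decode (g n)) + 1) * 2 ^ Zc (fst (prod_decode n)) - 1)"
  have p: "rf 1 (\<lambda>xs. xs!0)" by (rule rf_proj) simp
  have gr: "rf 1 (\<lambda>xs. g (xs!0))" by (rule rf_computable[OF g(1)])
  have "computable ?g"
    by (rule computable_rf) (intro rf_encode rf_sub rf_mult rf_add rf_fst rf_snd rf_const rf_pow2 rf_Zc p gr)
  moreover have e: "rat_of_code (?g (prod_encode (str_code s, t))) = rat_of_code (g (prod_encode (str_code s, t))) / 2 ^ zs s" for s t
    using rat_scale[of "g (prod_encode (str_code s, t))" "zs s"] by (simp add: Zc_code)
  moreover have "rat_of_code (?g (prod_encode (str_code s, t))) \<le> rat_of_code (?g (prod_encode (str_code s, Suc t)))" for s t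
    unfolding e using g(2) by (simp add: divide_right_mono)
  moreover have "(\<lambda>t. rat_of_code (?g (prod_encode (str_code s, t)))) \<longlonglongrightarrow> Mt M s" for s
    unfolding e Mt_def by (intro tendsto_divide g(3)[rule_format] tendsto_const) simp
  ultimately show "left_ce (Mt M)" unfolding left_ce_def by (intro exI[of _ ?g]) blast
qed

theorem proposition5p3:
  fixes M :: "bool list \<Rightarrow> real"
  assumes "universal M"
  shows "\<exists>Mt. left_ce_semimeasure Mt \<and> \<not> universal Mt \<and>
           MLR Mt = MLR M \<and> MLR M = (\<Union>\<rho>\<in>{\<rho>. left_ce_semimeasure \<rho>}. MLR \<rho>)"
proof (intro exI conjI)
  have lM: "left_ce_semimeasure M" using assms unfolding universal_def by blast
  have M0: "\<forall>s. 0 \<le> M s" using lM unfolding left_ce_semimeasure_def semimeasure_def by blast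
  show "left_ce_semimeasure (Mt M)" by (rule Mt_lce[OF lM])
  show "\<not> universal (Mt M)"
  proof
    assume "universal (Mt M)"
    then obtain c :: nat where c: "\<forall>s. M s \<le> real c * Mt M s" using lM unfolding universal_def by blast
    let ?s = "replicate c True @ [False]"
    have pos: "M ?s > 0" by (rule universal_pos[OF assms])
    have "M ?s \<le> real c * (M ?s / 2 ^ c)" using c[rule_format, of ?s] unfolding Mt_def zs_rep by simp
    also have "\<dots> = (real c / 2 ^ c) * M ?s" by simp
    also have "\<dots> < 1 * M ?s"
    proof (rule mult_strict_right_mono[OF _ pos])
      have "real c < 2 ^ c" using less_exp[of c] by (metis of_nat_less_iff of_nat_numeral of_nat_power)
      then show "real c / 2 ^ c < 1" by simp
    qed
    finally show False by simp
  qed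
  show "MLR (Mt M) = MLR M"
  proof
    show "MLR (Mt M) \<subseteq> MLR M"
    proof (rule MLR_dom[of _ 1 M, OF _ M0], intro allI)
      fix s
      have "M s / 2 ^ zs s \<le> M s / 1" by (rule divide_left_mono) (use M0 in auto)
      then show "Mt M s \<le> real 1 * M s" by (simp add: Mt_def)
    qed
    show "MLR M \<subseteq> MLR (Mt M)" by (rule MLR_Mt[OF M0])
  qed
  show "MLR M = (\<Union>\<rho>\<in>{\<rho>. left_ce_semimeasure \<rho>}. MLR \<rho>)"
  proof
    show "MLR M \<subseteq> (\<Union>\<rho>\<in>{\<rho>. left_ce_semimeasure \<rho>}. MLR \<rho>)" using lM by blast
    show "(\<Union>\<rho>\<in>{\<rho>. left_ce_semimeasure \<rho>}. MLR \<rho>) \<subseteq> MLR M"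
    proof (intro UN_least, simp)
      fix \<rho> assume "left_ce_semimeasure \<rho>"
      then obtain c :: nat where "\<forall>s. \<rho> s \<le> real c * M s" using assms unfolding universal_def by blast
      then show "MLR \<rho> \<subseteq> MLR M" by (rule MLR_dom[OF _ M0])
    qed
  qed
qed

end
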